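(* Let $B$ be any group and $p\ge 2$ an integer. If $w\in (B\wr C_p)'$, then $w$ can be written as the wreath recursion $$w=\Big(r_1,r_2,\dots,r_{p-1},\; r_1^{-1}\cdots r_{p-1}^{-1}\prod_{j=1}^{k}[f_j,g_j]\Big)$$ for some $r_1,\dots,r_{p-1},f_j,g_j\in B$ and some $k\le cw(B)$.
   Context: $C_p$ is the cyclic group of order $p$ acting on $\{1,\dots,p\}$ by $\sigma=(1,2,\dots,p)$. Elements of $B\wr C_p=B^p\rtimes C_p$ are written $(b_1,\dots,b_p)\tau$, with multiplication $(g_1,\dots,g_p)\tau\cdot(h_1,\dots,h_p)\rho=(g_1h_{\tau(1)},\dots,g_ph_{\tau(p)})\tau\rho$; $(b_1,\dots,b_p)$ denotes an element with trivial $C_p$-part. The commutator is $[a,b]=aba^{-1}b^{-1}$. The commutator length of $g\in G'$ is the least $n$ such that $g$ is a product of $n$ commutators; the commutator width $cw(G)$ is the maximum of commutator lengths over elements of $G'$. *)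

theory Defs
  imports "HOL-Algebra.Algebra" "HOL-Library.Extended_Nat"
begin

definition comm :: "('a, 'm) monoid_scheme \<Rightarrow> 'a \<Rightarrow> 'a \<Rightarrow> 'a" where
  "comm G a b = a \<otimes>\<^bsub>G\<^esub> b \<otimes>\<^bsub>G\<^esub> inv\<^bsub>G\<^esub> a \<otimes>\<^bsub>G\<^esub> inv\<^bsub>G\<^esub> b"

definition prodl :: "('a, 'm) monoid_scheme \<Rightarrow> 'a list \<Rightarrow> 'a" where
  "prodl G xs = foldr (\<lambda>x y. x \<otimes>\<^bsub>G\<^esub> y) xs \<one>\<^bsub>G\<^esub>"

definition comm_prod :: "('a, 'm) monoid_scheme \<Rightarrow> (nat \<Rightarrow> 'a) \<Rightarrow> (nat \<Rightarrow> 'a) \<Rightarrow> nat \<Rightarrow> 'a" where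
  "comm_prod G f g n = prodl G (map (\<lambda>j. comm G (f j) (g j)) [1..<n+1])"

definition comm_length :: "('a, 'm) monoid_scheme \<Rightarrow> 'a \<Rightarrow> nat" where
  "comm_length G x = (LEAST n. \<exists>f g. (\<forall>j. f j \<in> carrier G \<and> g j \<in> carrier G)
                                  \<and> x = comm_prod G f g n)"

definition cw :: "('a, 'm) monoid_scheme \<Rightarrow> enat" where
  "cw G = (SUP x \<in> derived G (carrier G). enat (comm_length G x))"

(* An element (b_1,...,b_p) sigma^t is represented
   as the pair (b, t) with b an extensional function on {1..p} and 0 <= t < p.
   sigma^t acts on {1..p} by i |-> ((i - 1 + t) mod p) + 1 (sigma = (1 2 ... p)). *)
definition cyc_act :: "nat \<Rightarrow> nat \<Rightarrow> nat \<Rightarrow> nat" where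
  "cyc_act p t i = ((i - 1 + t) mod p) + 1"

definition wreath :: "('b, 'm) monoid_scheme \<Rightarrow> nat \<Rightarrow> ((nat \<Rightarrow> 'b) \<times> nat) monoid" where
  "wreath B p = \<lparr> carrier = {(b, t). b \<in> {1..p} \<rightarrow>\<^sub>E carrier B \<and> t < p},
     monoid.mult = (\<lambda>x y. ((\<lambda>i\<in>{1..p}. fst x i \<otimes>\<^bsub>B\<^esub> fst y (cyc_act p (snd x) i)), (snd x + snd y) mod p)),
     one = ((\<lambda>i\<in>{1..p}. \<one>\<^bsub>B\<^esub>), 0) \<rparr>"

end

theory Submission
  imports Defs
begin


lemma cyc_act_in: "0 < p \<Longrightarrow> cyc_act p t i \<in> {1..p}"
  unfolding cyc_act_def by (simp add: Suc_le_eq)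

lemma cyc_act_comp: "0 < p \<Longrightarrow> i \<in> {1..p} \<Longrightarrow> cyc_act p s (cyc_act p t i) = cyc_act p ((t+s) mod p) i"
proof -
  assume "i \<in> {1..p}"
  then obtain j where "i = Suc j" by (cases i) auto
  then show ?thesis unfolding cyc_act_def by (simp add: mod_add_left_eq mod_add_right_eq add.assoc)
qed

lemma cyc_act_0: "i \<in> {1..p} \<Longrightarrow> cyc_act p 0 i = i"
  unfolding cyc_act_def by auto

lemma cyc_act_bij: assumes "0 < p" "t < p" shows "bij_betw (cyc_act p t) {1..p} {1..p}"
proof (rule bij_betw_byWitness[where f'="cyc_act p (p - t)"])
  show "\<forall>a\<in>{1..p}. cyc_act p (p - t) (cyc_act p t a) = a"
    using assms by (simp add: cyc_act_comp cyc_act_0)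
  show "\<forall>a\<in>{1..p}. cyc_act p t (cyc_act p (p - t) a) = a"
    using assms by (simp add: cyc_act_comp cyc_act_0)
qed (use assms cyc_act_in in auto)

lemma carrier_wreath: "carrier (wreath B p) = {(b, t). b \<in> {1..p} \<rightarrow>\<^sub>E carrier B \<and> t < p}"
  by (simp add: wreath_def)

lemma mult_wreath: "(a, s) \<otimes>\<^bsub>wreath B p\<^esub> (b, t) =
   ((\<lambda>i\<in>{1..p}. a i \<otimes>\<^bsub>B\<^esub> b (cyc_act p s i)), (s + t) mod p)"
  by (simp add: wreath_def)

lemma one_wreath: "\<one>\<^bsub>wreath B p\<^esub> = ((\<lambda>i\<in>{1..p}. \<one>\<^bsub>B\<^esub>), 0)"
  by (simp add: wreath_def)

lemma wreath_group:
  assumes B: "group B" and p: "0 < p"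
  shows "group (wreath B p)"
proof -
  interpret B: group B by fact
  show ?thesis
  proof (rule groupI)
    fix x y assume x: "x \<in> carrier (wreath B p)" and y: "y \<in> carrier (wreath B p)"
    obtain a s where xa: "x = (a, s)" by fastforce
    obtain b t where yb: "y = (b, t)" by fastforce
    have a: "a \<in> {1..p} \<rightarrow>\<^sub>E carrier B" and s: "s < p" using x unfolding xa carrier_wreath by simp_all
    have b: "b \<in> {1..p} \<rightarrow>\<^sub>E carrier B" and t: "t < p" using y unfolding yb carrier_wreath by simp_all
    have "(\<lambda>i\<in>{1..p}. a i \<otimes>\<^bsub>B\<^esub> b (cyc_act p s i)) \<in> {1..p} \<rightarrow>\<^sub>E carrier B"
      unfolding restrict_PiE_iff
    proof
      fix i assume i: "i \<in> {1..p}"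
      have "a i \<in> carrier B" using a i by blast
      moreover have "b (cyc_act p s i) \<in> carrier B" using b cyc_act_in[OF p] by blast
      ultimately show "a i \<otimes>\<^bsub>B\<^esub> b (cyc_act p s i) \<in> carrier B" by simp
    qed
    then show "x \<otimes>\<^bsub>wreath B p\<^esub> y \<in> carrier (wreath B p)"
      unfolding xa yb mult_wreath carrier_wreath using p by simp
  next
    show "\<one>\<^bsub>wreath B p\<^esub> \<in> carrier (wreath B p)" using p unfolding one_wreath carrier_wreath by auto
  next
    fix x y z assume x: "x \<in> carrier (wreath B p)" and y: "y \<in> carrier (wreath B p)"
      and z: "z \<in> carrier (wreath B p)"
    obtain a s where xa: "x = (a, s)" by fastforce
    obtain b t where yb: "y = (b, t)" by fastforce
    obtain c u where zc: "z = (c, u)" by fastforce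
    have a: "a \<in> {1..p} \<rightarrow>\<^sub>E carrier B" using x unfolding xa carrier_wreath by simp_all
    have b: "b \<in> {1..p} \<rightarrow>\<^sub>E carrier B" using y unfolding yb carrier_wreath by simp_all
    have c: "c \<in> {1..p} \<rightarrow>\<^sub>E carrier B" using z unfolding zc carrier_wreath by simp_all
    have e: "(\<lambda>i\<in>{1..p}. (\<lambda>i\<in>{1..p}. a i \<otimes>\<^bsub>B\<^esub> b (cyc_act p s i)) i \<otimes>\<^bsub>B\<^esub> c (cyc_act p ((s + t) mod p) i))
       = (\<lambda>i\<in>{1..p}. a i \<otimes>\<^bsub>B\<^esub> (\<lambda>i\<in>{1..p}. b i \<otimes>\<^bsub>B\<^esub> c (cyc_act p t i)) (cyc_act p s i))"
    proof (rule restrict_ext)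
      fix i assume i: "i \<in> {1..p}"
      have ci: "cyc_act p s i \<in> {1..p}" using cyc_act_in[OF p] by blast
      have "a i \<in> carrier B" using a i by blast
      moreover have "b (cyc_act p s i) \<in> carrier B" using b ci by blast
      moreover have "c (cyc_act p t (cyc_act p s i)) \<in> carrier B" using c cyc_act_in[OF p] by blast
      ultimately show "(\<lambda>i\<in>{1..p}. a i \<otimes>\<^bsub>B\<^esub> b (cyc_act p s i)) i \<otimes>\<^bsub>B\<^esub> c (cyc_act p ((s + t) mod p) i)
        = a i \<otimes>\<^bsub>B\<^esub> (\<lambda>i\<in>{1..p}. b i \<otimes>\<^bsub>B\<^esub> c (cyc_act p t i)) (cyc_act p s i)"
        using i ci by (simp add: cyc_act_comp[OF p i] B.m_assoc)
    qed
    have e2: "((s + t) mod p + u) mod p = (s + (t + u) mod p) mod p"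
      by (simp add: mod_add_left_eq mod_add_right_eq add.assoc)
    show "x \<otimes>\<^bsub>wreath B p\<^esub> y \<otimes>\<^bsub>wreath B p\<^esub> z = x \<otimes>\<^bsub>wreath B p\<^esub> (y \<otimes>\<^bsub>wreath B p\<^esub> z)"
      unfolding xa yb zc mult_wreath using e e2 by simp
  next
    fix x assume x: "x \<in> carrier (wreath B p)"
    obtain a s where xa: "x = (a, s)" by fastforce
    have a: "a \<in> {1..p} \<rightarrow>\<^sub>E carrier B" and s: "s < p" using x unfolding xa carrier_wreath by simp_all
    have e0: "(\<lambda>i\<in>{1..p}. (\<lambda>i\<in>{1..p}. \<one>\<^bsub>B\<^esub>) i \<otimes>\<^bsub>B\<^esub> a (cyc_act p 0 i)) = a"
    proof (rule ext)
      fix i show "(\<lambda>i\<in>{1..p}. (\<lambda>i\<in>{1..p}. \<one>\<^bsub>B\<^esub>) i \<otimes>\<^bsub>B\<^esub> a (cyc_act p 0 i)) i = a i"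
      proof (cases "i \<in> {1..p}")
        case True
        then have "a i \<in> carrier B" using a by blast
        then show ?thesis using True by (simp add: cyc_act_0)
      next
        case False
        then show ?thesis using PiE_arb[OF a False] by auto
      qed
    qed
    show "\<one>\<^bsub>wreath B p\<^esub> \<otimes>\<^bsub>wreath B p\<^esub> x = x"
      unfolding xa one_wreath mult_wreath e0 using s by simp
    let ?y = "(\<lambda>i\<in>{1..p}. inv\<^bsub>B\<^esub> (a (cyc_act p ((p - s) mod p) i)), (p - s) mod p)"
    have "(\<lambda>i\<in>{1..p}. inv\<^bsub>B\<^esub> (a (cyc_act p ((p - s) mod p) i))) \<in> {1..p} \<rightarrow>\<^sub>E carrier B"
      unfolding restrict_PiE_iff
    proof
      fix i assume i: "i \<in> {1..p}"
      have "a (cyc_act p ((p - s) mod p) i) \<in> carrier B" using a cyc_act_in[OF p] by blast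
      then show "inv\<^bsub>B\<^esub> (a (cyc_act p ((p - s) mod p) i)) \<in> carrier B" by simp
    qed
    then have "?y \<in> carrier (wreath B p)" unfolding carrier_wreath using p by simp
    have e: "(\<lambda>i\<in>{1..p}. (\<lambda>i\<in>{1..p}. inv\<^bsub>B\<^esub> (a (cyc_act p ((p - s) mod p) i))) i
        \<otimes>\<^bsub>B\<^esub> a (cyc_act p ((p - s) mod p) i)) = (\<lambda>i\<in>{1..p}. \<one>\<^bsub>B\<^esub>)"
    proof (rule restrict_ext)
      fix i assume i: "i \<in> {1..p}"
      have "a (cyc_act p ((p - s) mod p) i) \<in> carrier B" using a cyc_act_in[OF p] by blast
      then show "(\<lambda>i\<in>{1..p}. inv\<^bsub>B\<^esub> (a (cyc_act p ((p - s) mod p) i))) i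
        \<otimes>\<^bsub>B\<^esub> a (cyc_act p ((p - s) mod p) i) = \<one>\<^bsub>B\<^esub>" using i by simp
    qed
    have e2: "((p - s) mod p + s) mod p = 0" using s by (cases "s = 0") auto
    have "?y \<otimes>\<^bsub>wreath B p\<^esub> x = \<one>\<^bsub>wreath B p\<^esub>"
      unfolding xa mult_wreath one_wreath using e e2 by simp
    then show "\<exists>y\<in>carrier (wreath B p). y \<otimes>\<^bsub>wreath B p\<^esub> x = \<one>\<^bsub>wreath B p\<^esub>"
      using \<open>?y \<in> carrier (wreath B p)\<close> by blast
  qed
qed



lemma hom_derived_one:
  assumes G: "group G" and A: "comm_group A" and h: "h \<in> hom G A"
    and w: "w \<in> derived G (carrier G)"
  shows "h w = \<one>\<^bsub>A\<^esub>"
proof -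
  interpret A: comm_group A by fact
  interpret gh: group_hom G A h
    using G A.is_group h unfolding group_hom_def group_hom_axioms_def by blast
  have "h ` derived G (carrier G) = derived A (h ` carrier G)" using gh.derived_img by simp
  also have "\<dots> = {\<one>\<^bsub>A\<^esub>}" using A.derived_eq_singleton gh.hom_closed by blast
  finally show ?thesis using w by blast
qed

lemma snd_hom:
  assumes p: "0 < p"
  shows "(\<lambda>x. int (snd x)) \<in> hom (wreath B p) (integer_mod_group p)"
  unfolding hom_def
proof safe
  fix x assume "x \<in> carrier (wreath B p)"
  then show "int (snd x) \<in> carrier (integer_mod_group p)"
    using p by (auto simp: carrier_wreath carrier_integer_mod_group)
next
  fix x y assume "x \<in> carrier (wreath B p)" "y \<in> carrier (wreath B p)"
  obtain a s where xa: "x = (a, s)" by fastforce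
  obtain b t where yb: "y = (b, t)" by fastforce
  show "int (snd (x \<otimes>\<^bsub>wreath B p\<^esub> y)) = int (snd x) \<otimes>\<^bsub>integer_mod_group p\<^esub> int (snd y)"
    unfolding xa yb mult_wreath by (simp add: of_nat_mod)
qed

definition Phi :: "('b, 'm) monoid_scheme \<Rightarrow> nat \<Rightarrow> (nat \<Rightarrow> 'b) \<times> nat \<Rightarrow> 'b set" where
  "Phi B p x = finprod (B Mod derived B (carrier B)) (\<lambda>i. derived B (carrier B) #>\<^bsub>B\<^esub> fst x i) {1..p}"

lemma Phi_hom:
  assumes B: "group B" and p: "0 < p"
  shows "Phi B p \<in> hom (wreath B p) (B Mod derived B (carrier B))"
proof -
  interpret B: group B by fact
  define D where "D = derived B (carrier B)"
  interpret N: normal D B unfolding D_def by (rule B.derived_self_is_normal)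
  interpret Q: comm_group "B Mod D" unfolding D_def by (rule B.derived_quot_is_comm_group)
  have rc: "D #>\<^bsub>B\<^esub> c \<in> carrier (B Mod D)" if "c \<in> carrier B" for c
    using that unfolding carrier_FactGroup by blast
  have 1: "Phi B p \<in> carrier (wreath B p) \<rightarrow> carrier (B Mod derived B (carrier B))"
  proof
    fix x assume x: "x \<in> carrier (wreath B p)"
    obtain a s where xa: "x = (a, s)" by fastforce
    have a: "a \<in> {1..p} \<rightarrow>\<^sub>E carrier B" using x unfolding xa carrier_wreath by simp
    have "(\<lambda>i. D #>\<^bsub>B\<^esub> a i) \<in> {1..p} \<rightarrow> carrier (B Mod D)"
      using a rc by blast
    then show "Phi B p x \<in> carrier (B Mod derived B (carrier B))"
      unfolding Phi_def xa D_def[symmetric] fst_conv by (rule Q.finprod_closed)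
  qed
  have 2: "Phi B p (x \<otimes>\<^bsub>wreath B p\<^esub> y) = Phi B p x \<otimes>\<^bsub>B Mod derived B (carrier B)\<^esub> Phi B p y"
    if x: "x \<in> carrier (wreath B p)" and y: "y \<in> carrier (wreath B p)" for x y
  proof -
    obtain a s where xa: "x = (a, s)" by fastforce
    obtain b t where yb: "y = (b, t)" by fastforce
    have a: "a \<in> {1..p} \<rightarrow>\<^sub>E carrier B" and s: "s < p" using x unfolding xa carrier_wreath by simp_all
    have b: "b \<in> {1..p} \<rightarrow>\<^sub>E carrier B" using y unfolding yb carrier_wreath by simp_all
    have ca: "(\<lambda>i. D #>\<^bsub>B\<^esub> a i) \<in> {1..p} \<rightarrow> carrier (B Mod D)" using a rc by blast
    have cb: "(\<lambda>i. D #>\<^bsub>B\<^esub> b i) \<in> {1..p} \<rightarrow> carrier (B Mod D)" using b rc by blast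
    have cb': "(\<lambda>i. D #>\<^bsub>B\<^esub> b (cyc_act p s i)) \<in> {1..p} \<rightarrow> carrier (B Mod D)"
      using b rc cyc_act_in[OF p] by blast
    have bij: "bij_betw (cyc_act p s) {1..p} {1..p}" by (rule cyc_act_bij[OF p s])
    have "finprod (B Mod D) (\<lambda>i. D #>\<^bsub>B\<^esub> (\<lambda>i\<in>{1..p}. a i \<otimes>\<^bsub>B\<^esub> b (cyc_act p s i)) i) {1..p}
        = finprod (B Mod D) (\<lambda>i. (D #>\<^bsub>B\<^esub> a i) \<otimes>\<^bsub>B Mod D\<^esub> (D #>\<^bsub>B\<^esub> b (cyc_act p s i))) {1..p}"
    proof (rule Q.finprod_cong')
      fix i assume i: "i \<in> {1..p}"
      have "a i \<in> carrier B" using a i by blast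
      moreover have "b (cyc_act p s i) \<in> carrier B" using b cyc_act_in[OF p] by blast
      ultimately show "D #>\<^bsub>B\<^esub> (\<lambda>i\<in>{1..p}. a i \<otimes>\<^bsub>B\<^esub> b (cyc_act p s i)) i
         = (D #>\<^bsub>B\<^esub> a i) \<otimes>\<^bsub>B Mod D\<^esub> (D #>\<^bsub>B\<^esub> b (cyc_act p s i))"
        using i by (simp add: N.rcos_sum)
    next
      show "(\<lambda>i. (D #>\<^bsub>B\<^esub> a i) \<otimes>\<^bsub>B Mod D\<^esub> (D #>\<^bsub>B\<^esub> b (cyc_act p s i))) \<in> {1..p} \<rightarrow> carrier (B Mod D)"
      proof (rule Pi_I)
        fix i assume i: "i \<in> {1..p}"
        show "(D #>\<^bsub>B\<^esub> a i) \<otimes>\<^bsub>B Mod D\<^esub> (D #>\<^bsub>B\<^esub> b (cyc_act p s i)) \<in> carrier (B Mod D)"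
          using ca cb' i by (intro Q.m_closed) blast+
      qed
    qed simp
    also have "\<dots> = finprod (B Mod D) (\<lambda>i. D #>\<^bsub>B\<^esub> a i) {1..p} \<otimes>\<^bsub>B Mod D\<^esub>
        finprod (B Mod D) (\<lambda>i. D #>\<^bsub>B\<^esub> b (cyc_act p s i)) {1..p}"
      using ca cb' by (rule Q.finprod_multf)
    also have "finprod (B Mod D) (\<lambda>i. D #>\<^bsub>B\<^esub> b (cyc_act p s i)) {1..p}
        = finprod (B Mod D) (\<lambda>i. D #>\<^bsub>B\<^esub> b i) (cyc_act p s ` {1..p})"
      using Q.finprod_reindex[of "\<lambda>i. D #>\<^bsub>B\<^esub> b i" "cyc_act p s" "{1..p}"]
        bij cb unfolding bij_betw_def by simp
    also have "cyc_act p s ` {1..p} = {1..p}" using bij unfolding bij_betw_def by simp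
    finally show "Phi B p (x \<otimes>\<^bsub>wreath B p\<^esub> y) = Phi B p x \<otimes>\<^bsub>B Mod derived B (carrier B)\<^esub> Phi B p y"
      unfolding Phi_def xa yb mult_wreath D_def[symmetric] by simp
  qed
  show ?thesis unfolding hom_def using 1 2 by blast
qed



lemma prodl_Nil [simp]: "prodl G [] = \<one>\<^bsub>G\<^esub>"
  by (simp add: prodl_def)

lemma prodl_Cons [simp]: "prodl G (x # xs) = x \<otimes>\<^bsub>G\<^esub> prodl G xs"
  by (simp add: prodl_def)

lemma (in monoid) prodl_closed: "set xs \<subseteq> carrier G \<Longrightarrow> prodl G xs \<in> carrier G"
  by (induction xs) auto

lemma (in monoid) prodl_append:
  "set xs \<subseteq> carrier G \<Longrightarrow> set ys \<subseteq> carrier G \<Longrightarrow> prodl G (xs @ ys) = prodl G xs \<otimes> prodl G ys"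
  by (induction xs) (auto simp: m_assoc prodl_closed)

lemma prodl_hom:
  assumes gh: "group_hom G H h" and H: "comm_group H" and d: "distinct xs"
    and f: "\<forall>i\<in>set xs. f i \<in> carrier G"
  shows "h (prodl G (map f xs)) = finprod H (\<lambda>i. h (f i)) (set xs)"
  using d f
proof (induction xs)
  case Nil
  then show ?case using group_hom.hom_one[OF gh] by (simp add: comm_monoid.finprod_empty[OF comm_group.axioms(1)[OF H]])
next
  case (Cons x xs)
  interpret gh: group_hom G H h by fact
  interpret H: comm_group H by fact
  have cl: "prodl G (map f xs) \<in> carrier G" using Cons.prems by (intro gh.G.prodl_closed) auto
  have "h (prodl G (map f (x # xs))) = h (f x) \<otimes>\<^bsub>H\<^esub> h (prodl G (map f xs))"
    using Cons.prems cl by simp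
  also have "\<dots> = h (f x) \<otimes>\<^bsub>H\<^esub> finprod H (\<lambda>i. h (f i)) (set xs)"
    using Cons by simp
  also have "\<dots> = finprod H (\<lambda>i. h (f i)) (insert x (set xs))"
    using Cons.prems by (subst H.finprod_insert) (auto simp: Pi_def)
  finally show ?case by simp
qed

lemma comm_closed: "group G \<Longrightarrow> a \<in> carrier G \<Longrightarrow> b \<in> carrier G \<Longrightarrow> comm G a b \<in> carrier G"
  unfolding comm_def by (simp add: group.inv_closed monoid.m_closed group.is_monoid)

lemma comm_inv:
  assumes G: "group G" and a: "a \<in> carrier G" and b: "b \<in> carrier G"
  shows "inv\<^bsub>G\<^esub> (comm G a b) = comm G b a"
proof -
  interpret group G by fact
  have "comm G b a \<otimes>\<^bsub>G\<^esub> comm G a b = \<one>\<^bsub>G\<^esub>"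
  proof -
    have c1: "inv\<^bsub>G\<^esub> x \<otimes>\<^bsub>G\<^esub> (x \<otimes>\<^bsub>G\<^esub> y) = y" if "x \<in> carrier G" "y \<in> carrier G" for x y
      using that by (simp add: m_assoc[symmetric])
    have c2: "x \<otimes>\<^bsub>G\<^esub> (inv\<^bsub>G\<^esub> x \<otimes>\<^bsub>G\<^esub> y) = y" if "x \<in> carrier G" "y \<in> carrier G" for x y
      using that by (simp add: m_assoc[symmetric])
    show ?thesis unfolding comm_def using a b by (simp add: m_assoc c1 c2)
  qed
  then show ?thesis using a b comm_closed[OF G] by (intro inv_equality) auto
qed

lemma comm_prod_closed:
  assumes "group G" "\<forall>j. f j \<in> carrier G \<and> g j \<in> carrier G"
  shows "comm_prod G f g n \<in> carrier G"
proof -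
  interpret group G by fact
  show ?thesis unfolding comm_prod_def
    using assms(2) comm_closed[OF assms(1)] by (intro prodl_closed) auto
qed

lemma comm_prod_add:
  assumes G: "group G" and fg: "\<forall>j. f j \<in> carrier G \<and> g j \<in> carrier G"
    and fg': "\<forall>j. f' j \<in> carrier G \<and> g' j \<in> carrier G"
  shows "comm_prod G f g n \<otimes>\<^bsub>G\<^esub> comm_prod G f' g' m
    = comm_prod G (\<lambda>j. if j \<le> n then f j else f' (j - n)) (\<lambda>j. if j \<le> n then g j else g' (j - n)) (n + m)"
proof -
  interpret group G by fact
  let ?F = "\<lambda>j. if j \<le> n then f j else f' (j - n)"
  let ?G = "\<lambda>j. if j \<le> n then g j else g' (j - n)"
  have sp: "[1..<n + m + 1] = [1..<n+1] @ [n+1..<(n+1)+m]"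
    using upt_add_eq_append[of 1 "n+1" m] by (simp add: add.commute add.left_commute)
  have m1: "map (\<lambda>j. comm G (?F j) (?G j)) [1..<n+1] = map (\<lambda>j. comm G (f j) (g j)) [1..<n+1]"
    by (rule map_cong) auto
  have m2: "map (\<lambda>j. comm G (?F j) (?G j)) [n+1..<(n+1)+m] = map (\<lambda>j. comm G (f' j) (g' j)) [1..<m+1]"
    by (rule nth_equalityI) (auto simp del: upt_Suc simp add: nth_upt)
  have c1: "set (map (\<lambda>j. comm G (f j) (g j)) [1..<n+1]) \<subseteq> carrier G" using fg comm_closed[OF G] by auto
  have c2: "set (map (\<lambda>j. comm G (f' j) (g' j)) [1..<m+1]) \<subseteq> carrier G" using fg' comm_closed[OF G] by auto
  show ?thesis unfolding comm_prod_def sp map_append m1 m2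
    using c1 c2 by (simp add: prodl_append)
qed

lemma derived_comm_prod:
  assumes G: "group G" and x: "x \<in> derived G (carrier G)"
  shows "\<exists>n f g. (\<forall>j. f j \<in> carrier G \<and> g j \<in> carrier G) \<and> x = comm_prod G f g n"
  using x unfolding derived_def
proof (induction rule: generate.induct)
  case one
  have "(\<forall>j::nat. \<one>\<^bsub>G\<^esub> \<in> carrier G \<and> \<one>\<^bsub>G\<^esub> \<in> carrier G) \<and> \<one>\<^bsub>G\<^esub> = comm_prod G (\<lambda>_. \<one>\<^bsub>G\<^esub>) (\<lambda>_. \<one>\<^bsub>G\<^esub>) 0"
    by (simp add: comm_prod_def group.is_monoid[OF G] monoid.one_closed)
  note W = this
  show ?case by (rule exI, rule exI, rule exI, rule W)
next
  case (incl h)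
  then obtain a b where ab: "a \<in> carrier G" "b \<in> carrier G"
    "h = a \<otimes>\<^bsub>G\<^esub> b \<otimes>\<^bsub>G\<^esub> inv\<^bsub>G\<^esub> a \<otimes>\<^bsub>G\<^esub> inv\<^bsub>G\<^esub> b"
    by blast
  have hc: "h = comm G a b" using ab(3) by (simp add: comm_def)
  have "comm_prod G (\<lambda>_. a) (\<lambda>_. b) 1 = comm G a b"
    unfolding comm_prod_def using comm_closed[OF G ab(1,2)] by (simp add: monoid.r_one group.is_monoid[OF G])
  then have "(\<forall>j::nat. a \<in> carrier G \<and> b \<in> carrier G) \<and> h = comm_prod G (\<lambda>_. a) (\<lambda>_. b) 1"
    using ab(1,2) hc by simp
  note W = this
  show ?case by (rule exI, rule exI, rule exI, rule W)
next
  case (inv h)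
  then obtain a b where ab: "a \<in> carrier G" "b \<in> carrier G"
    "h = a \<otimes>\<^bsub>G\<^esub> b \<otimes>\<^bsub>G\<^esub> inv\<^bsub>G\<^esub> a \<otimes>\<^bsub>G\<^esub> inv\<^bsub>G\<^esub> b"
    by blast
  have hc: "inv\<^bsub>G\<^esub> h = comm G b a" using ab(3) comm_inv[OF G ab(1,2)] by (simp add: comm_def)
  have "comm_prod G (\<lambda>_. b) (\<lambda>_. a) 1 = comm G b a"
    unfolding comm_prod_def using comm_closed[OF G ab(2,1)] by (simp add: monoid.r_one group.is_monoid[OF G])
  then have "(\<forall>j::nat. b \<in> carrier G \<and> a \<in> carrier G) \<and> inv\<^bsub>G\<^esub> h = comm_prod G (\<lambda>_. b) (\<lambda>_. a) 1"
    using ab(1,2) hc by simp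
  note W = this
  show ?case by (rule exI, rule exI, rule exI, rule W)
next
  case (eng h1 h2)
  then obtain n f g m f' g' where fg: "\<forall>j. f j \<in> carrier G \<and> g j \<in> carrier G" "h1 = comm_prod G f g n"
    and fg': "\<forall>j. f' j \<in> carrier G \<and> g' j \<in> carrier G" "h2 = comm_prod G f' g' m" by blast
  define F where "F = (\<lambda>j. if j \<le> n then f j else f' (j - n))"
  define H where "H = (\<lambda>j. if j \<le> n then g j else g' (j - n))"
  have c: "\<forall>j. F j \<in> carrier G \<and> H j \<in> carrier G"
    unfolding F_def H_def using fg(1) fg'(1) by simp
  have "h1 \<otimes>\<^bsub>G\<^esub> h2 = comm_prod G F H (n + m)"
    unfolding fg(2) fg'(2) F_def H_def by (rule comm_prod_add[OF G fg(1) fg'(1)])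
  then have W: "(\<forall>j. F j \<in> carrier G \<and> H j \<in> carrier G) \<and> h1 \<otimes>\<^bsub>G\<^esub> h2 = comm_prod G F H (n + m)"
    using c by simp
  show ?case by (rule exI, rule exI, rule exI, rule W)
qed



theorem mainTheorem2:
  fixes B :: "('b, 'm) monoid_scheme" and p :: nat and w :: "(nat \<Rightarrow> 'b) \<times> nat"
  assumes "group B" and "p \<ge> 2"
    and "w \<in> derived (wreath B p) (carrier (wreath B p))"
  shows "\<exists>r f g k. (\<forall>i\<in>{1..<p}. r i \<in> carrier B)
      \<and> (\<forall>j\<in>{1..k}. f j \<in> carrier B \<and> g j \<in> carrier B)
      \<and> enat k \<le> cw B
      \<and> w = ((\<lambda>i\<in>{1..p}. if i < p then r i
               else prodl B (map (\<lambda>i. inv\<^bsub>B\<^esub> (r i)) [1..<p]) \<otimes>\<^bsub>B\<^esub> comm_prod B f g k), 0)"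
proof -
  interpret B: group B by fact
  have p: "0 < p" using assms(2) by simp
  have Wg: "group (wreath B p)" by (rule wreath_group[OF assms(1) p])
  interpret W: group "wreath B p" by fact
  define D where "D = derived B (carrier B)"
  interpret N: normal D B unfolding D_def by (rule B.derived_self_is_normal)
  interpret Q: comm_group "B Mod D" unfolding D_def by (rule B.derived_quot_is_comm_group)
  have wc: "w \<in> carrier (wreath B p)" using W.derived_in_carrier assms(3) by blast
  obtain a s where wa: "w = (a, s)" by fastforce
  have a: "a \<in> {1..p} \<rightarrow>\<^sub>E carrier B" using wc unfolding wa carrier_wreath by simp
  have ac: "a i \<in> carrier B" if "i \<in> {1..p}" for i using a that by blast
  have "int (snd w) = \<one>\<^bsub>integer_mod_group p\<^esub>"
    by (rule hom_derived_one[OF Wg abelian_integer_mod_group snd_hom[OF p] assms(3)])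
  then have s0: "s = 0" unfolding wa by simp
  have "Phi B p w = \<one>\<^bsub>B Mod D\<^esub>"
    unfolding D_def by (rule hom_derived_one[OF Wg B.derived_quot_is_comm_group Phi_hom[OF assms(1) p] assms(3)])
  then have phi1: "finprod (B Mod D) (\<lambda>i. D #>\<^bsub>B\<^esub> a i) {1..p} = \<one>\<^bsub>B Mod D\<^esub>"
    unfolding Phi_def wa D_def by simp
  define h where "h = (\<lambda>x. D #>\<^bsub>B\<^esub> x)"
  have gh: "group_hom B (B Mod D) h"
    unfolding group_hom_def group_hom_axioms_def h_def
    using N.r_coset_hom_Mod B.is_group Q.is_group by blast
  interpret GH: group_hom B "B Mod D" h by fact
  define P where "P = prodl B (map (\<lambda>i. inv\<^bsub>B\<^esub> (a i)) [1..<p])"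
  define c where "c = inv\<^bsub>B\<^esub> P \<otimes>\<^bsub>B\<^esub> a p"
  have Pc: "P \<in> carrier B" unfolding P_def using ac by (intro B.prodl_closed) auto
  have apc: "a p \<in> carrier B" using ac p by simp
  have cc: "c \<in> carrier B" unfolding c_def using Pc apc by simp
  have hP: "h P = finprod (B Mod D) (\<lambda>i. h (inv\<^bsub>B\<^esub> (a i))) {1..<p}"
    unfolding P_def using prodl_hom[OF gh Q.comm_group_axioms, of "[1..<p]" "\<lambda>i. inv\<^bsub>B\<^esub> (a i)"] ac
    by simp
  define Xs where "Xs = finprod (B Mod D) (\<lambda>i. h (a i)) {1..<p}"
  have hac: "(\<lambda>i. h (a i)) \<in> {1..<p} \<rightarrow> carrier (B Mod D)" using ac by auto
  have hiac: "(\<lambda>i. h (inv\<^bsub>B\<^esub> (a i))) \<in> {1..<p} \<rightarrow> carrier (B Mod D)" using ac by auto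
  have Xc: "Xs \<in> carrier (B Mod D)" unfolding Xs_def using hac by simp
  have Zc: "h P \<in> carrier (B Mod D)" using Pc by simp
  have "h P \<otimes>\<^bsub>B Mod D\<^esub> Xs = finprod (B Mod D) (\<lambda>i. h (inv\<^bsub>B\<^esub> (a i)) \<otimes>\<^bsub>B Mod D\<^esub> h (a i)) {1..<p}"
    unfolding hP Xs_def using Q.finprod_multf[OF hiac hac] by simp
  also have "\<dots> = finprod (B Mod D) (\<lambda>i. \<one>\<^bsub>B Mod D\<^esub>) {1..<p}"
  proof (rule Q.finprod_cong')
    fix i assume "i \<in> {1..<p}"
    then have ai: "a i \<in> carrier B" using ac by simp
    then show "h (inv\<^bsub>B\<^esub> (a i)) \<otimes>\<^bsub>B Mod D\<^esub> h (a i) = \<one>\<^bsub>B Mod D\<^esub>"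
      by (metis GH.hom_inv GH.hom_closed Q.l_inv ai)
  qed (use Q.one_closed in auto)
  also have "\<dots> = \<one>\<^bsub>B Mod D\<^esub>" by (rule Q.finprod_one)
  finally have ZX: "h P \<otimes>\<^bsub>B Mod D\<^esub> Xs = \<one>\<^bsub>B Mod D\<^esub>" .
  have ins: "{1..p} = insert p {1..<p}" using p by auto
  have "finprod (B Mod D) (\<lambda>i. h (a i)) {1..p} = h (a p) \<otimes>\<^bsub>B Mod D\<^esub> Xs"
    unfolding ins Xs_def using hac apc by (subst Q.finprod_insert) auto
  then have YX: "h (a p) \<otimes>\<^bsub>B Mod D\<^esub> Xs = \<one>\<^bsub>B Mod D\<^esub>" using phi1 unfolding h_def by simp
  have invZ: "inv\<^bsub>B Mod D\<^esub> (h P) = Xs"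
    using ZX Xc Zc Q.m_comm by (intro Q.inv_equality) auto
  have "h c = inv\<^bsub>B Mod D\<^esub> (h P) \<otimes>\<^bsub>B Mod D\<^esub> h (a p)"
    unfolding c_def using Pc apc by simp
  also have "\<dots> = \<one>\<^bsub>B Mod D\<^esub>" using invZ YX Xc apc Q.m_comm by simp
  finally have "D #>\<^bsub>B\<^esub> c = D" unfolding h_def by simp
  moreover have "c \<in> D #>\<^bsub>B\<^esub> c" using B.rcos_self[OF cc N.subgroup_axioms] .
  ultimately have cD: "c \<in> D" by simp
  have ex: "\<exists>n f g. (\<forall>j. f j \<in> carrier B \<and> g j \<in> carrier B) \<and> c = comm_prod B f g n"
    using derived_comm_prod[OF assms(1)] cD unfolding D_def by blast
  define k where "k = comm_length B c"
  have "\<exists>f g. (\<forall>j. f j \<in> carrier B \<and> g j \<in> carrier B) \<and> c = comm_prod B f g k"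
    unfolding k_def comm_length_def using ex by (rule LeastI_ex)
  then obtain f g where fg: "\<forall>j. f j \<in> carrier B \<and> g j \<in> carrier B" and cf: "c = comm_prod B f g k"
    by blast
  have kc: "enat k \<le> cw B"
    unfolding cw_def k_def using cD unfolding D_def by (rule SUP_upper2) simp
  have eq: "a = (\<lambda>i\<in>{1..p}. if i < p then a i
               else prodl B (map (\<lambda>i. inv\<^bsub>B\<^esub> (a i)) [1..<p]) \<otimes>\<^bsub>B\<^esub> comm_prod B f g k)"
  proof (rule ext)
    fix i
    show "a i = (\<lambda>i\<in>{1..p}. if i < p then a i
               else prodl B (map (\<lambda>i. inv\<^bsub>B\<^esub> (a i)) [1..<p]) \<otimes>\<^bsub>B\<^esub> comm_prod B f g k) i"
    proof (cases "i \<in> {1..p}")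
      case True
      show ?thesis
      proof (cases "i < p")
        case False
        then have ip: "i = p" using True by simp
        have "P \<otimes>\<^bsub>B\<^esub> c = a p" unfolding c_def using Pc apc by (simp add: B.m_assoc[symmetric])
        then show ?thesis using True ip unfolding cf P_def by simp
      qed (use True in simp)
    next
      case False
      then show ?thesis using PiE_arb[OF a False] by auto
    qed
  qed
  have "(\<forall>i\<in>{1..<p}. a i \<in> carrier B)
      \<and> (\<forall>j\<in>{1..k}. f j \<in> carrier B \<and> g j \<in> carrier B)
      \<and> enat k \<le> cw B
      \<and> w = ((\<lambda>i\<in>{1..p}. if i < p then a i
               else prodl B (map (\<lambda>i. inv\<^bsub>B\<^esub> (a i)) [1..<p]) \<otimes>\<^bsub>B\<^esub> comm_prod B f g k), 0)"
    using ac fg kc eq unfolding wa s0 by auto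
  then show ?thesis by blast
qed

end
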